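(* Let $\alpha\in\{1/2,-1/2\}$, $\nu_1>0$ and $x'>0$ be fixed, let $s=s(N)\in\mathbb Z_{\ge0}$ satisfy $s\sim N^{1/4}\nu_1$, and let $x=N^{-1/2}x'-1$ (which lies in $[-1,1]$ for large $N$). Then as $N\to\infty$, $$N^{-1/4}(-1)^sJ_{s,\alpha}(x)\sim\frac{\sin[\nu_1\sqrt{2x'}]}{2^\alpha\sqrt{x'}}.$$
   Context: $J_{k,1/2}$ and $J_{k,-1/2}$ ($k\ge0$) are defined by $J_{0,1/2}=1$, $J_{1,1/2}(x)=2x$, $J_{0,-1/2}=1$, $J_{1,-1/2}(x)=2x-1$, both satisfying $xp_k(x)=\frac12p_{k+1}(x)+\frac12p_{k-1}(x)$ for $k\ge1$; equivalently $J_{k,1/2}(\cos\theta)=\frac{\sin((k+1)\theta)}{\sin\theta}$ and $J_{k,-1/2}(\cos\theta)=\frac{\cos((k+1/2)\theta)}{\cos(\theta/2)}$. *)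

theory Defs
  imports "HOL-Analysis.Analysis" "HOL-Library.Landau_Symbols"
begin

text \<open>The polynomials J_{k,alpha} for alpha in {1/2, -1/2}:
  J_0 = 1, J_1 = 2x (alpha = 1/2) resp. 2x - 1 (alpha = -1/2), i.e. J_1 = 2x + alpha - 1/2,
  and x J_k = (J_{k+1} + J_{k-1})/2, i.e. J_{k+1} = 2x J_k - J_{k-1}.\<close>
fun Jpoly :: "real \<Rightarrow> nat \<Rightarrow> real \<Rightarrow> real" where
  "Jpoly \<alpha> 0 x = 1"
| "Jpoly \<alpha> (Suc 0) x = 2 * x + \<alpha> - 1/2"
| "Jpoly \<alpha> (Suc (Suc k)) x = 2 * x * Jpoly \<alpha> (Suc k) x - Jpoly \<alpha> k x"

end

theory Submission
  imports Defs
begin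
lemma Jtrig:
  assumes rec0: "Jpoly \<alpha> 0 (- cos p) * sin (a*p) = sin ((0+a)*p)"
      and rec1: "- Jpoly \<alpha> 1 (- cos p) * sin (a*p) = sin ((1+a)*p)"
  shows "(-1)^k * Jpoly \<alpha> k (- cos p) * sin (a*p) = sin ((real k + a)*p)"
proof -
  have "(-1)^k * Jpoly \<alpha> k (- cos p) * sin (a*p) = sin ((real k + a)*p) \<and>
        (-1)^(Suc k) * Jpoly \<alpha> (Suc k) (- cos p) * sin (a*p) = sin ((real (Suc k) + a)*p)"
  proof (induction k)
    case 0 then show ?case using rec0 rec1 by simp
  next
    case (Suc k)
    have "sin ((real (Suc (Suc k)) + a)*p) = 2 * cos p * sin ((real (Suc k) + a)*p) - sin ((real k + a)*p)"
    proof -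
      have e1: "(real (Suc (Suc k)) + a)*p = (real (Suc k) + a)*p + p" by (simp add: algebra_simps)
      have e2: "(real k + a)*p = (real (Suc k) + a)*p - p" by (simp add: algebra_simps)
      show ?thesis unfolding e1 e2 sin_add sin_diff by (simp add: algebra_simps)
    qed
    also have "\<dots> = 2 * cos p * ((-1)^(Suc k) * Jpoly \<alpha> (Suc k) (- cos p) * sin (a*p))
        - (-1)^k * Jpoly \<alpha> k (- cos p) * sin (a*p)" using Suc by simp
    also have "\<dots> = (-1)^(Suc (Suc k)) * Jpoly \<alpha> (Suc (Suc k)) (- cos p) * sin (a*p)"
      by (simp add: algebra_simps)
    finally show ?case using Suc by simp
  qed
  then show ?thesis by blast
qed

lemma J_half: "(-1)^k * Jpoly (1/2) k (- cos p) * sin (1*p) = sin ((real k + 1)*p)"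
  by (rule Jtrig) (simp_all add: sin_double)

lemma J_mhalf: "(-1)^k * Jpoly (-1/2) k (- cos p) * sin ((1/2)*p) = sin ((real k + 1/2)*p)"
proof (rule Jtrig)
  show "Jpoly (- 1 / 2) 0 (- cos p) * sin (1 / 2 * p) = sin ((0 + 1 / 2) * p)" by simp
  have "sin ((1 + 1/2)*p) = sin (p/2 + p)" by (simp add: algebra_simps)
  also have "\<dots> = sin (p/2) * (2*cos p + 1)"
  proof -
    have c: "cos p = 2 * cos (p/2)^2 - 1" using cos_double_cos[of "p/2"] by simp
    have s: "sin p = 2 * sin (p/2) * cos (p/2)" using sin_double[of "p/2"] by simp
    show ?thesis unfolding sin_add s c by (simp add: algebra_simps power2_eq_square)
  qed
  finally show "- Jpoly (- 1 / 2) 1 (- cos p) * sin (1 / 2 * p) = sin ((1 + 1 / 2) * p)"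
    by (simp add: algebra_simps)
qed
lemma arcsin_lim: "((\<lambda>y. arcsin y / y) \<longlongrightarrow> 1) (at (0::real))"
proof -
  have "(arcsin has_field_derivative 1) (at 0)" using DERIV_arcsin[of 0] by simp
  then show ?thesis unfolding has_field_derivative_iff by simp
qed
lemma sin_lim: "((\<lambda>y. sin y / y) \<longlongrightarrow> 1) (at (0::real))"
proof -
  have "(sin has_field_derivative 1) (at 0)" using DERIV_sin[of 0] by simp
  then show ?thesis unfolding has_field_derivative_iff by simp
qed
lemma t1: "((\<lambda>N::nat. real N powr (-1/4)) \<longlongrightarrow> 0) at_top"
  by (rule tendsto_neg_powr) (simp_all add: filterlim_real_sequentially)
lemma LTE: "(f \<longlongrightarrow> l) F \<Longrightarrow> eventually (\<lambda>x. f x = g x) F \<Longrightarrow> l = l' \<Longrightarrow> (g \<longlongrightarrow> l') F"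
  using Lim_transform_eventually by blast

lemma generic:
  fixes \<alpha> a \<nu>1 x' :: real and s :: "nat \<Rightarrow> nat"
  assumes a: "0 < a" "a \<le> 1" and xp: "x' > 0"
    and I: "\<And>k p. (-1)^k * Jpoly \<alpha> k (- cos p) * sin (a*p) = sin ((real k + a)*p)"
    and aeq: "a * sqrt (2*x') = 2 powr \<alpha> * sqrt x'"
    and nu: "\<nu>1 > 0"
    and sas: "(\<lambda>N. real (s N)) \<sim>[at_top] (\<lambda>N. real N powr (1/4) * \<nu>1)"
  shows "((\<lambda>N. real N powr (-1/4) * (-1) ^ (s N)
              * Jpoly \<alpha> (s N) (real N powr (-1/2) * x' - 1))
          \<longlongrightarrow> sin (\<nu>1 * sqrt (2 * x')) / (2 powr \<alpha> * sqrt x')) at_top"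
proof -
  define c where "c = sqrt (x'/2)"
  have c0: "c > 0" using xp by (simp add: c_def)
  have c2: "2 * c = sqrt (2*x')"
  proof -
    have "sqrt (2*x') = sqrt (2^2 * (x'/2))" by simp
    also have "\<dots> = 2 * c" unfolding c_def real_sqrt_mult by simp
    finally show ?thesis by simp
  qed
  define t where "t N = c * real N powr (-1/4)" for N :: nat
  define \<phi> where "\<phi> N = 2 * arcsin (t N)" for N
  have tlim: "(t \<longlongrightarrow> 0) at_top" unfolding t_def using tendsto_mult_left[OF t1, of c] by simp
  have ev1: "eventually (\<lambda>N. t N < 1) at_top" using order_tendstoD(2)[OF tlim, of 1] by simp
  have ev2: "eventually (\<lambda>N::nat. N > 0) at_top" by (simp add: eventually_gt_at_top)
  have evt: "eventually (\<lambda>N. 0 < N \<and> 0 < t N \<and> t N < 1) at_top"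
    using ev1 ev2 by eventually_elim (auto simp: t_def c0)
  have tat: "filterlim t (at 0) at_top"
    by (rule filterlim_atI[OF tlim]) (use evt in \<open>auto elim: eventually_mono\<close>)
  have q1: "real N powr (1/4) * real N powr (-1/4) = 1" if "N > 0" for N :: nat
    using that by (simp add: powr_add[symmetric])
  have asl: "((\<lambda>N. arcsin (t N) / t N) \<longlongrightarrow> 1) at_top"
    using filterlim_compose[OF arcsin_lim tat] by (simp add: o_def)
  have L1: "((\<lambda>N. real N powr (1/4) * \<phi> N) \<longlongrightarrow> sqrt (2*x')) at_top"
  proof -
    have "((\<lambda>N. 2 * c * (arcsin (t N) / t N)) \<longlongrightarrow> 2 * c * 1) at_top"
      by (intro tendsto_intros asl)
    moreover have "eventually (\<lambda>N. 2 * c * (arcsin (t N) / t N) = real N powr (1/4) * \<phi> N) at_top"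
      using evt
    proof eventually_elim
      case (elim N)
      have "real N powr (1/4) * t N = c" unfolding t_def using q1[of N] elim by (simp add: algebra_simps)
      then show ?case using elim unfolding \<phi>_def by (auto simp: field_simps)
    qed
    ultimately show ?thesis by (rule LTE) (use c2 in simp)
  qed
  have L2: "((\<lambda>N. real (s N) * real N powr (-1/4)) \<longlongrightarrow> \<nu>1) at_top"
  proof -
    have "((\<lambda>N. real (s N) / (real N powr (1/4) * \<nu>1)) \<longlongrightarrow> 1) at_top"
      by (rule asymp_equivD_strong[OF sas]) (rule eventually_mono[OF ev2], use nu in auto)
    then have "((\<lambda>N. \<nu>1 * (real (s N) / (real N powr (1/4) * \<nu>1))) \<longlongrightarrow> \<nu>1 * 1) at_top"
      by (intro tendsto_intros)
    moreover have "eventually (\<lambda>N. \<nu>1 * (real (s N) / (real N powr (1/4) * \<nu>1)) = real (s N) * real N powr (-1/4)) at_top"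
      using ev2
    proof eventually_elim
      case (elim N)
      have "real N powr (-1/4) = 1 / real N powr (1/4)" using q1[OF elim] elim
        by (simp add: field_simps)
      then show ?case using nu by simp
    qed
    ultimately show ?thesis by (rule LTE) simp
  qed
  have L3: "((\<lambda>N. (real (s N) * real N powr (-1/4) + a * real N powr (-1/4)) * (real N powr (1/4) * \<phi> N))
      \<longlongrightarrow> (\<nu>1 + a * 0) * sqrt (2*x')) at_top"
    by (intro tendsto_intros L1 L2 t1)
  have L3': "((\<lambda>N. sin ((real (s N) + a) * \<phi> N)) \<longlongrightarrow> sin (\<nu>1 * sqrt (2*x'))) at_top"
  proof -
    have "((\<lambda>N. sin ((real (s N) * real N powr (-1/4) + a * real N powr (-1/4)) * (real N powr (1/4) * \<phi> N)))
      \<longlongrightarrow> sin ((\<nu>1 + a * 0) * sqrt (2*x'))) at_top"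
      by (intro tendsto_intros L3)
    moreover have "eventually (\<lambda>N. sin ((real (s N) * real N powr (-1/4) + a * real N powr (-1/4)) * (real N powr (1/4) * \<phi> N))
       = sin ((real (s N) + a) * \<phi> N)) at_top"
      using ev2
    proof eventually_elim
      case (elim N)
      have "(real (s N) * real N powr (-1/4) + a * real N powr (-1/4)) * (real N powr (1/4) * \<phi> N)
          = (real (s N) + a) * \<phi> N * (real N powr (1/4) * real N powr (-1/4))" by (simp add: algebra_simps)
      also have "\<dots> = (real (s N) + a) * \<phi> N" using q1[OF elim] by simp
      finally show ?case by (rule arg_cong)
    qed
    ultimately show ?thesis by (rule LTE) simp
  qed
  have phipos: "0 < a * \<phi> N \<and> a * \<phi> N < pi" if "0 < t N" "t N < 1" for N
  proof -
    have "0 < arcsin (t N)" using that by (simp add: arcsin_less_arcsin[of 0, simplified])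
    moreover have "arcsin (t N) < pi/2" using that arcsin_lt_bounded[of "t N"] by simp
    ultimately have "0 < \<phi> N" "\<phi> N < pi" unfolding \<phi>_def by auto
    moreover have "a * \<phi> N \<le> 1 * \<phi> N" using a \<open>0 < \<phi> N\<close> by (intro mult_right_mono) auto
    ultimately have "a * \<phi> N < pi" by linarith
    then show ?thesis using a \<open>0 < \<phi> N\<close> by simp
  qed
  have L4a: "((\<lambda>N. a * \<phi> N) \<longlongrightarrow> 0) at_top"
  proof -
    have "((\<lambda>N. a * real N powr (-1/4) * (real N powr (1/4) * \<phi> N)) \<longlongrightarrow> a * 0 * sqrt (2*x')) at_top"
      by (intro tendsto_intros L1 t1)
    moreover have "eventually (\<lambda>N. a * real N powr (-1/4) * (real N powr (1/4) * \<phi> N) = a * \<phi> N) at_top"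
      using ev2
    proof eventually_elim
      case (elim N)
      have "a * real N powr (-1/4) * (real N powr (1/4) * \<phi> N) = a * \<phi> N * (real N powr (1/4) * real N powr (-1/4))"
        by (simp add: algebra_simps)
      then show ?case using q1[OF elim] by (simp add: mult.commute)
    qed
    ultimately show ?thesis by (rule LTE) simp
  qed
  have L4b: "filterlim (\<lambda>N. a * \<phi> N) (at 0) at_top"
    by (rule filterlim_atI[OF L4a]) (rule eventually_mono[OF evt], use phipos in fastforce)
  have sl: "((\<lambda>N. sin (a * \<phi> N) / (a * \<phi> N)) \<longlongrightarrow> 1) at_top"
    using filterlim_compose[OF sin_lim L4b] by (simp add: o_def)
  have L4: "((\<lambda>N. real N powr (1/4) * sin (a * \<phi> N)) \<longlongrightarrow> 2 powr \<alpha> * sqrt x') at_top"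
  proof -
    have "((\<lambda>N. sin (a * \<phi> N) / (a * \<phi> N) * a * (real N powr (1/4) * \<phi> N)) \<longlongrightarrow> 1 * a * sqrt (2*x')) at_top"
      by (intro tendsto_intros sl L1)
    moreover have "eventually (\<lambda>N. sin (a * \<phi> N) / (a * \<phi> N) * a * (real N powr (1/4) * \<phi> N) = real N powr (1/4) * sin (a * \<phi> N)) at_top"
      using evt
    proof eventually_elim
      case (elim N)
      then have "a * \<phi> N \<noteq> 0" using phipos[of N] by auto
      then show ?case by (simp add: field_simps)
    qed
    ultimately show ?thesis by (rule LTE) (use aeq in simp)
  qed
  have nz: "2 powr \<alpha> * sqrt x' \<noteq> 0" using xp by simp
  have L5: "((\<lambda>N. sin ((real (s N) + a) * \<phi> N) / (real N powr (1/4) * sin (a * \<phi> N)))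
      \<longlongrightarrow> sin (\<nu>1 * sqrt (2 * x')) / (2 powr \<alpha> * sqrt x')) at_top"
    by (rule tendsto_divide[OF L3' L4 nz])
  moreover have "eventually (\<lambda>N. sin ((real (s N) + a) * \<phi> N) / (real N powr (1/4) * sin (a * \<phi> N)) =
      real N powr (-1/4) * (-1) ^ (s N) * Jpoly \<alpha> (s N) (real N powr (-1/2) * x' - 1)) at_top"
    using evt
  proof eventually_elim
    case (elim N)
    have sn: "sin (a * \<phi> N) > 0" using phipos[of N] elim by (auto intro: sin_gt_zero)
    have cosphi: "- cos (\<phi> N) = real N powr (-1/2) * x' - 1"
    proof -
      have "cos (\<phi> N) = 1 - 2 * (sin (arcsin (t N)))^2" unfolding \<phi>_def cos_double_sin by simp
      also have "\<dots> = 1 - 2 * (t N)^2" using elim by simp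
      also have "(t N)^2 = c^2 * real N powr (-1/2)" unfolding t_def using elim
        by (simp add: power_mult_distrib powr_power)
      also have "c^2 = x'/2" unfolding c_def using xp by simp
      finally show ?thesis by simp
    qed
    have "sin ((real (s N) + a) * \<phi> N) = (-1)^(s N) * Jpoly \<alpha> (s N) (real N powr (-1/2) * x' - 1) * sin (a * \<phi> N)"
      using I[of "s N" "\<phi> N"] cosphi by simp
    moreover have "real N powr (-1/4) = 1 / real N powr (1/4)" using q1[of N] elim
        by (simp add: field_simps)
    ultimately show ?case using sn elim by (simp add: field_simps)
  qed
  ultimately show ?thesis by (rule LTE) simp
qed
theorem lemma6p3:
  fixes \<alpha> \<nu>1 x' :: real and s :: "nat \<Rightarrow> nat"
  assumes "\<alpha> \<in> {1/2, -1/2}" and "\<nu>1 > 0" and "x' > 0"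
    and "(\<lambda>N. real (s N)) \<sim>[at_top] (\<lambda>N. real N powr (1/4) * \<nu>1)"
  shows "((\<lambda>N. real N powr (-1/4) * (-1) ^ (s N)
              * Jpoly \<alpha> (s N) (real N powr (-1/2) * x' - 1))
          \<longlongrightarrow> sin (\<nu>1 * sqrt (2 * x')) / (2 powr \<alpha> * sqrt x')) at_top"
proof -
  have s2: "sqrt (2*x') = sqrt 2 * sqrt x'" by (simp add: real_sqrt_mult)
  from assms(1) show ?thesis
  proof
    assume h: "\<alpha> = 1/2"
    show ?thesis unfolding h
    proof (rule generic[of 1 x' "1/2"])
      show "1 * sqrt (2*x') = 2 powr (1/2) * sqrt x'" unfolding s2 by (simp add: powr_half_sqrt)
    qed (use J_half assms in auto)
  next
    assume "\<alpha> \<in> {-1/2}"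
    then have h: "\<alpha> = -1/2" by simp
    show ?thesis unfolding h
    proof (rule generic[of "1/2" x' "-1/2"])
      have "2 powr (-1/2::real) = 1 / sqrt 2"
        by (simp add: powr_minus_divide powr_half_sqrt)
      then show "1/2 * sqrt (2*x') = 2 powr (-1/2) * sqrt x'"
      proof -
        assume e: "2 powr (-1/2::real) = 1 / sqrt 2"
        have "sqrt 2 * sqrt 2 = (2::real)" by simp
        then show ?thesis unfolding s2 e by (simp add: field_simps)
      qed
    qed (use J_mhalf assms in auto)
  qed
qed

end
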